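(* Let $G$ be either (i) $K_n-M$ where $n\geq 4$ is even and $M$ is a perfect matching of $K_n$, or (ii) $K_{n,n}-M$ where $n\geq 3$ and $M$ is a perfect matching of $K_{n,n}$. Suppose $G$ is edge-reconstructable (so that $ern(G)$ is defined). Then $ern(G)\geq 3$.
   Context: All graphs are finite and simple; $K-M$ denotes the graph on $V(K)$ with edge set $E(K)\setminus M$. For a graph $G$ and $e\in E(G)$, the unlabeled graph $G-e$ is an edge-card of $G$; the edge-deck $\mathcal{ED}(G)$ is the multiset of all edge-cards $G-e$, $e\in E(G)$ (taken up to isomorphism). For a sub-multiset $S\subseteq\mathcal{ED}(G)$, a blocker of $S$ is a graph $H\not\cong G$ such that $S\subseteq\mathcal{ED}(H)$ as multisets. $G$ is reconstructable from $S$ if $S$ has no blocker; $G$ is edge-reconstructable if it is reconstructable from $\mathcal{ED}(G)$. For such $G$, the edge reconstruction number $ern(G)$ is the minimum size of a sub-multiset $S\subseteq\mathcal{ED}(G)$ from which $G$ is reconstructable. *)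

theory Defs
  imports Main "HOL-Library.Multiset"
begin

text \<open>Finite simple graphs with vertices drawn from nat: a pair (V, E) of a finite
vertex set and a set of 2-element subsets of V.  Every finite simple graph is
isomorphic to one of this form, so unlabeled graphs are handled via isomorphism.\<close>

type_synonym graph = "nat set \<times> nat set set"

definition wf_graph :: "graph \<Rightarrow> bool" where
  "wf_graph G \<longleftrightarrow> finite (fst G) \<and> (\<forall>e\<in>snd G. e \<subseteq> fst G \<and> card e = 2)"

definition graph_iso :: "graph \<Rightarrow> graph \<Rightarrow> bool" where
  "graph_iso G H \<longleftrightarrow> (\<exists>f. bij_betw f (fst G) (fst H) \<and> (\<lambda>e. f ` e) ` snd G = snd H)"

definition iso_class :: "graph \<Rightarrow> graph set" where
  "iso_class G = {H. wf_graph H \<and> graph_iso G H}"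

definition edge_delete :: "graph \<Rightarrow> nat set \<Rightarrow> graph" where
  "edge_delete G e = (fst G, snd G - {e})"

definition graph_minus :: "graph \<Rightarrow> nat set set \<Rightarrow> graph" where
  "graph_minus K M = (fst K, snd K - M)"

definition edge_deck :: "graph \<Rightarrow> graph set multiset" where
  "edge_deck G = image_mset (\<lambda>e. iso_class (edge_delete G e)) (mset_set (snd G))"

definition is_blocker :: "graph \<Rightarrow> graph set multiset \<Rightarrow> graph \<Rightarrow> bool" where
  "is_blocker G S H \<longleftrightarrow> wf_graph H \<and> \<not> graph_iso H G \<and> S \<subseteq># edge_deck H"

definition reconstructable_from :: "graph \<Rightarrow> graph set multiset \<Rightarrow> bool" where
  "reconstructable_from G S \<longleftrightarrow> \<not> (\<exists>H. is_blocker G S H)"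

definition edge_reconstructable :: "graph \<Rightarrow> bool" where
  "edge_reconstructable G \<longleftrightarrow> reconstructable_from G (edge_deck G)"

definition ern :: "graph \<Rightarrow> nat" where
  "ern G = (LEAST k. \<exists>S. S \<subseteq># edge_deck G \<and> size S = k \<and> reconstructable_from G S)"

definition complete_graph :: "nat set \<Rightarrow> graph" where
  "complete_graph V = (V, {e. e \<subseteq> V \<and> card e = 2})"

definition complete_bipartite :: "nat \<Rightarrow> graph" where
  "complete_bipartite n = ({0..<2*n}, {{a, b} | a b. a < n \<and> n \<le> b \<and> b < 2*n})"

definition perfect_matching :: "graph \<Rightarrow> nat set set \<Rightarrow> bool" where
  "perfect_matching K M \<longleftrightarrow> M \<subseteq> snd K \<and> (\<forall>v\<in>fst K. \<exists>!e. e \<in> M \<and> v \<in> e)"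

end

theory Submission
  imports Defs
begin


lemma iso_refl: "graph_iso G G"
  unfolding graph_iso_def by (rule exI[of _ id]) auto

lemma iso_trans: assumes "graph_iso A B" "graph_iso B C" shows "graph_iso A C"
proof -
  obtain f where f: "bij_betw f (fst A) (fst B)" "(\<lambda>e. f ` e) ` snd A = snd B"
    using assms(1) unfolding graph_iso_def by blast
  obtain g where g: "bij_betw g (fst B) (fst C)" "(\<lambda>e. g ` e) ` snd B = snd C"
    using assms(2) unfolding graph_iso_def by blast
  have "(\<lambda>e. (g \<circ> f) ` e) ` snd A = snd C"
    unfolding g(2)[symmetric] f(2)[symmetric] by (simp add: image_image image_comp)
  then show ?thesis unfolding graph_iso_def using bij_betw_trans[OF f(1) g(1)] by blast
qed

lemma iso_sym: assumes "wf_graph A" "graph_iso A B" shows "graph_iso B A"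
proof -
  obtain f where f: "bij_betw f (fst A) (fst B)" "(\<lambda>e. f ` e) ` snd A = snd B"
    using assms(2) unfolding graph_iso_def by blast
  have inj: "inj_on f (fst A)" using f(1) bij_betw_def by blast
  have sub: "\<And>e. e \<in> snd A \<Longrightarrow> e \<subseteq> fst A" using assms(1) unfolding wf_graph_def by blast
  have "(\<lambda>e. inv_into (fst A) f ` e) ` snd B = (\<lambda>e. inv_into (fst A) f ` (f ` e)) ` snd A"
    unfolding f(2)[symmetric] by (rule image_image)
  also have "\<dots> = (\<lambda>e. e) ` snd A"
    by (rule image_cong[OF refl]) (rule inv_into_image_cancel[OF inj sub])
  finally have "(\<lambda>e. inv_into (fst A) f ` e) ` snd B = snd A" by simp
  then show ?thesis unfolding graph_iso_def using bij_betw_inv_into[OF f(1)] by blast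
qed

lemma iso_class_eq: assumes "wf_graph A" "wf_graph B" "graph_iso A B"
  shows "iso_class A = iso_class B"
  unfolding iso_class_def using assms iso_sym iso_trans by blast

lemma wf_edge_delete: "wf_graph G \<Longrightarrow> wf_graph (edge_delete G e)"
  unfolding wf_graph_def edge_delete_def by auto

lemma wf_edge: assumes "wf_graph G" "e \<in> snd G" shows "\<exists>x y. e = {x,y} \<and> x \<noteq> y \<and> x \<in> fst G \<and> y \<in> fst G"
proof -
  have "e \<subseteq> fst G" "card e = 2" using assms unfolding wf_graph_def by auto
  then obtain x y where "e = {x,y}" "x \<noteq> y" unfolding card_2_iff by blast
  then show ?thesis using \<open>e \<subseteq> fst G\<close> by blast
qed

lemma iso_by_adj:
  assumes wA: "wf_graph A" and wB: "wf_graph B" and f: "bij_betw f (fst A) (fst B)"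
    and adj: "\<And>x y. x \<in> fst A \<Longrightarrow> y \<in> fst A \<Longrightarrow> ({x,y} \<in> snd A \<longleftrightarrow> {f x, f y} \<in> snd B)"
  shows "graph_iso A B"
proof -
  have "(\<lambda>e. f ` e) ` snd A = snd B"
  proof
    show "(\<lambda>e. f ` e) ` snd A \<subseteq> snd B"
    proof
      fix e' assume "e' \<in> (\<lambda>e. f ` e) ` snd A"
      then obtain e where e: "e \<in> snd A" "e' = f ` e" by blast
      obtain x y where "e = {x,y}" "x \<in> fst A" "y \<in> fst A" using wf_edge[OF wA e(1)] by blast
      then show "e' \<in> snd B" using adj e by auto
    qed
  next
    show "snd B \<subseteq> (\<lambda>e. f ` e) ` snd A"
    proof
      fix e' assume e': "e' \<in> snd B"
      obtain u v where uv: "e' = {u,v}" "u \<in> fst B" "v \<in> fst B" using wf_edge[OF wB e'] by blast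
      obtain x where x: "x \<in> fst A" "u = f x" using uv f unfolding bij_betw_def by blast
      obtain y where y: "y \<in> fst A" "v = f y" using uv f unfolding bij_betw_def by blast
      have "{x,y} \<in> snd A" using adj[OF x(1) y(1)] e' uv x y by simp
      moreover have "e' = f ` {x,y}" using uv x y by simp
      ultimately show "e' \<in> (\<lambda>e. f ` e) ` snd A" by blast
    qed
  qed
  then show ?thesis unfolding graph_iso_def using f by blast
qed

lemma iso_adj:
  assumes wA: "wf_graph A" and f: "bij_betw f (fst A) (fst B)" "(\<lambda>e. f ` e) ` snd A = snd B"
    and x: "x \<in> fst A" and y: "y \<in> fst A"
  shows "{x,y} \<in> snd A \<longleftrightarrow> {f x, f y} \<in> snd B"
proof
  assume "{x,y} \<in> snd A"
  then have "f ` {x,y} \<in> snd B" using f(2) by blast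
  then show "{f x, f y} \<in> snd B" by simp
next
  assume "{f x, f y} \<in> snd B"
  then obtain e where e: "e \<in> snd A" "f ` e = f ` {x,y}" using f(2) by (metis image_empty image_iff image_insert)
  have "e \<subseteq> fst A" using wA e(1) unfolding wf_graph_def by blast
  moreover have "{x,y} \<subseteq> fst A" using x y by blast
  moreover have "inj_on f (fst A)" using f(1) unfolding bij_betw_def by blast
  ultimately have "e = {x,y}" using e(2) inj_on_image_eq_iff by metis
  then show "{x,y} \<in> snd A" using e by simp
qed

lemma iso_delete:
  assumes wA: "wf_graph A" and f: "bij_betw f (fst A) (fst B)" "(\<lambda>e. f ` e) ` snd A = snd B"
    and e: "e \<in> snd A"
  shows "graph_iso (edge_delete A e) (edge_delete B (f ` e)) \<and> f ` e \<in> snd B"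
proof -
  have inj: "inj_on f (fst A)" using f(1) bij_betw_def by blast
  have sub: "\<And>e. e \<in> snd A \<Longrightarrow> e \<subseteq> fst A" using wA unfolding wf_graph_def by blast
  have inj2: "inj_on (\<lambda>e. f ` e) (snd A)"
    unfolding inj_on_def using inj sub inj_on_image_eq_iff by metis
  have "(\<lambda>e. f ` e) ` (snd A - {e}) = (\<lambda>e. f ` e) ` snd A - (\<lambda>e. f ` e) ` {e}"
    by (rule inj_on_image_set_diff[OF inj2]) (use e in auto)
  then have "(\<lambda>e. f ` e) ` snd (edge_delete A e) = snd (edge_delete B (f ` e))"
    unfolding edge_delete_def f(2) by simp
  moreover have "bij_betw f (fst (edge_delete A e)) (fst (edge_delete B (f ` e)))"
    unfolding edge_delete_def using f(1) by simp
  moreover have "f ` e \<in> snd B" using e f(2) by blast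
  ultimately show ?thesis unfolding graph_iso_def by blast
qed

lemma ern_ge3:
  assumes wG: "wf_graph G" and wG0: "wf_graph G0" and iso: "graph_iso G G0"
    and T: "\<And>e. e \<in> snd G0 \<Longrightarrow> graph_iso (edge_delete G0 e0) (edge_delete G0 e)"
    and e0: "e0 \<in> snd G0"
    and wH: "wf_graph H" and nH: "\<not> graph_iso H G0"
    and h: "h1 \<noteq> h2" "h1 \<in> snd H" "h2 \<in> snd H"
    and i1: "graph_iso (edge_delete H h1) (edge_delete G0 e0)"
    and i2: "graph_iso (edge_delete H h2) (edge_delete G0 e0)"
    and rec: "edge_reconstructable G"
  shows "3 \<le> ern G"
proof -
  define c where "c = iso_class (edge_delete G0 e0)"
  obtain f where f: "bij_betw f (fst G) (fst G0)" "(\<lambda>e. f ` e) ` snd G = snd G0"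
    using iso unfolding graph_iso_def by blast
  have cG: "iso_class (edge_delete G e) = c" if "e \<in> snd G" for e
  proof -
    have 1: "graph_iso (edge_delete G e) (edge_delete G0 (f ` e))" "f ` e \<in> snd G0"
      using iso_delete[OF wG f that] by (rule conjunct1, rule conjunct2)
    have "graph_iso (edge_delete G e) (edge_delete G0 e0)"
      using iso_trans[OF 1(1) iso_sym[OF wf_edge_delete[OF wG0] T[OF 1(2)]]] .
    then show ?thesis unfolding c_def using iso_class_eq[OF wf_edge_delete[OF wG] wf_edge_delete[OF wG0]] by blast
  qed
  have deck: "edge_deck G = replicate_mset (size (mset_set (snd G))) c"
  proof -
    have "edge_deck G = image_mset (\<lambda>_. c) (mset_set (snd G))"
      unfolding edge_deck_def
      by (rule image_mset_cong) (metis cG elem_mset_set empty_iff finite_set_mset_mset_set mset_set.infinite set_mset_empty)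
    then show ?thesis by (simp add: image_mset_const_eq)
  qed
  have finH: "finite (snd H)"
  proof -
    have "snd H \<subseteq> Pow (fst H)" using wH unfolding wf_graph_def by blast
    then show ?thesis using wH unfolding wf_graph_def using finite_subset by blast
  qed
  have "mset_set {h1,h2} \<subseteq># mset_set (snd H)"
    by (rule subset_imp_msubset_mset_set) (use h finH in auto)
  then have "image_mset (\<lambda>e. iso_class (edge_delete H e)) (mset_set {h1,h2}) \<subseteq># edge_deck H"
    unfolding edge_deck_def by (rule image_mset_subseteq_mono)
  moreover have "iso_class (edge_delete H h1) = c" "iso_class (edge_delete H h2) = c"
    unfolding c_def using iso_class_eq[OF wf_edge_delete[OF wH] wf_edge_delete[OF wG0]] i1 i2 by blast+
  ultimately have dH: "replicate_mset 2 c \<subseteq># edge_deck H" using h(1) by (simp add: numeral_2_eq_2)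
  have nHG: "\<not> graph_iso H G"
  proof
    assume "graph_iso H G"
    then show False using nH iso_trans[OF _ iso] by blast
  qed
  have noP: "\<not> (\<exists>S. S \<subseteq># edge_deck G \<and> size S = k \<and> reconstructable_from G S)" if "k < 3" for k
  proof
    assume "\<exists>S. S \<subseteq># edge_deck G \<and> size S = k \<and> reconstructable_from G S"
    then obtain S where S: "S \<subseteq># edge_deck G" "size S = k" "reconstructable_from G S" by blast
    obtain m where "S = replicate_mset m c" using S(1) deck by (metis msubseteq_replicate_msetE)
    then have "S = replicate_mset k c" using S(2) by simp
    moreover have "replicate_mset k c \<subseteq># replicate_mset 2 c"
      using that by (simp add: replicate_mset_msubseteq_iff)
    ultimately have "S \<subseteq># edge_deck H" using dH by (metis subset_mset.trans)
    then have "is_blocker G S H" unfolding is_blocker_def using wH nHG by blast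
    then show False using S(3) unfolding reconstructable_from_def by blast
  qed
  have "\<exists>S. S \<subseteq># edge_deck G \<and> size S = size (edge_deck G) \<and> reconstructable_from G S"
    using rec unfolding edge_reconstructable_def by blast
  then have P: "\<exists>S. S \<subseteq># edge_deck G \<and> size S = ern G \<and> reconstructable_from G S"
    unfolding ern_def by (rule LeastI)
  show ?thesis using noP[of "ern G"] P not_less by blast
qed



definition pm :: "nat set set \<Rightarrow> nat \<Rightarrow> nat" where "pm M x = (SOME y. {x,y} \<in> M)"

lemma pm_basic:
  assumes pmK: "perfect_matching K M" and wfK: "\<forall>e\<in>snd K. e \<subseteq> fst K \<and> card e = 2"
    and x: "x \<in> fst K"
  shows "{x, pm M x} \<in> M \<and> pm M x \<noteq> x \<and> pm M x \<in> fst K \<and> (\<forall>y. {x,y} \<in> M \<longleftrightarrow> y = pm M x)"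
proof -
  obtain e where e: "e \<in> M" "x \<in> e" and un: "\<And>e'. e' \<in> M \<Longrightarrow> x \<in> e' \<Longrightarrow> e' = e"
    using pmK x unfolding perfect_matching_def by blast
  have eK: "e \<in> snd K" using e pmK unfolding perfect_matching_def by blast
  then have "card e = 2" "e \<subseteq> fst K" using wfK by auto
  then obtain y where y: "e = {x,y}" "y \<noteq> x" using e(2) unfolding card_2_iff by auto
  then have ex: "\<exists>y. {x,y} \<in> M" using e by blast
  have 1: "{x, pm M x} \<in> M" unfolding pm_def using someI_ex[OF ex] .
  have 2: "pm M x \<noteq> x"
  proof
    assume "pm M x = x"
    then have "{x} \<in> snd K" using 1 pmK unfolding perfect_matching_def by auto
    then show False using wfK by fastforce
  qed
  have 3: "pm M x \<in> fst K" using 1 pmK wfK unfolding perfect_matching_def by blast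
  have 4: "{x,y'} \<in> M \<longleftrightarrow> y' = pm M x" for y'
  proof
    assume "{x,y'} \<in> M"
    then have "{x,y'} = {x, pm M x}" using un 1 by blast
    then show "y' = pm M x" using 2 by (metis doubleton_eq_iff)
  qed (use 1 in simp)
  show ?thesis using 1 2 3 4 by blast
qed

locale pmat =
  fixes V :: "nat set" and p :: "nat \<Rightarrow> nat"
  assumes finV: "finite V"
    and pV: "x \<in> V \<Longrightarrow> p x \<in> V"
    and pp: "x \<in> V \<Longrightarrow> p (p x) = x"
    and pne: "x \<in> V \<Longrightarrow> p x \<noteq> x"
begin

lemma p_eq_iff: "x \<in> V \<Longrightarrow> y \<in> V \<Longrightarrow> p x = y \<longleftrightarrow> x = p y"
  using pp by metis

lemma p_inj: "x \<in> V \<Longrightarrow> y \<in> V \<Longrightarrow> p x = p y \<longleftrightarrow> x = y"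
  using pp by metis

definition aut :: "(nat \<Rightarrow> nat) \<Rightarrow> bool" where
  "aut s \<longleftrightarrow> bij_betw s V V \<and> (\<forall>x\<in>V. s (p x) = p (s x))"

lemma aut_id: "aut id" unfolding aut_def by auto

lemma aut_comp: assumes "aut s" "aut t" shows "aut (t \<circ> s)"
proof -
  have b: "bij_betw s V V" "bij_betw t V V" using assms unfolding aut_def by auto
  have "\<forall>x\<in>V. (t \<circ> s) (p x) = p ((t \<circ> s) x)"
  proof
    fix x assume x: "x \<in> V"
    have "s x \<in> V" using b(1) x unfolding bij_betw_def by blast
    then show "(t \<circ> s) (p x) = p ((t \<circ> s) x)" using assms x unfolding aut_def by simp
  qed
  then show ?thesis unfolding aut_def using bij_betw_trans[OF b] by blast
qed

end

definition tr :: "nat \<Rightarrow> nat \<Rightarrow> nat \<Rightarrow> nat" where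
  "tr a b x = (if x = a then b else if x = b then a else x)"

lemma bij_tr: "a \<in> V \<Longrightarrow> b \<in> V \<Longrightarrow> bij_betw (tr a b) V V"
  by (rule bij_betw_byWitness[where f' = "tr a b"]) (auto simp: tr_def)

context pmat
begin

lemma aut_flip: "a \<in> V \<Longrightarrow> aut (tr a (p a))"
  unfolding aut_def using bij_tr pV pp by (auto simp: tr_def p_inj)

lemma aut_P: assumes "x \<in> V" "y \<in> V" "y \<noteq> x" "y \<noteq> p x"
  shows "aut (tr x y \<circ> tr (p x) (p y))"
proof -
  have d: "p x \<noteq> y" "p y \<noteq> x" "p x \<noteq> p y" "p x \<noteq> x" "p y \<noteq> y"
    using assms pp pne by metis+
  show ?thesis unfolding aut_def
    using assms d pV pp bij_betw_trans[OF bij_tr[of "p x" V "p y"] bij_tr[of x V y]]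
    by (auto simp: tr_def p_inj)
qed

lemma aut_inj: "aut s \<Longrightarrow> x \<in> V \<Longrightarrow> y \<in> V \<Longrightarrow> s x = s y \<longleftrightarrow> x = y"
  unfolding aut_def bij_betw_def inj_on_def by blast

lemma aut_V: "aut s \<Longrightarrow> x \<in> V \<Longrightarrow> s x \<in> V"
  unfolding aut_def bij_betw_def by blast

end



lemma del_iso:
  assumes wG: "wf_graph G" and s: "bij_betw s (fst G) (fst G)"
    and adj: "\<And>x y. x \<in> fst G \<Longrightarrow> y \<in> fst G \<Longrightarrow> ({x,y} \<in> snd G \<longleftrightarrow> {s x, s y} \<in> snd G)"
    and a: "a \<in> fst G" and b: "b \<in> fst G"
  shows "graph_iso (edge_delete G {a,b}) (edge_delete G {s a, s b})"
proof (rule iso_by_adj[OF wf_edge_delete[OF wG] wf_edge_delete[OF wG]])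
  show "bij_betw s (fst (edge_delete G {a, b})) (fst (edge_delete G {s a, s b}))"
    using s unfolding edge_delete_def by simp
  fix x y assume x: "x \<in> fst (edge_delete G {a, b})" and y: "y \<in> fst (edge_delete G {a, b})"
  then have xy: "x \<in> fst G" "y \<in> fst G" unfolding edge_delete_def by auto
  have inj: "inj_on s (fst G)" using s unfolding bij_betw_def by blast
  have "s ` {x,y} = s ` {a,b} \<longleftrightarrow> {x,y} = {a,b}"
    by (rule inj_on_image_eq_iff[OF inj]) (use xy a b in auto)
  then have "{s x, s y} = {s a, s b} \<longleftrightarrow> {x,y} = {a,b}" by simp
  then show "({x, y} \<in> snd (edge_delete G {a, b})) = ({s x, s y} \<in> snd (edge_delete G {s a, s b}))"
    unfolding edge_delete_def using adj[OF xy] by auto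
qed

context pmat
begin

lemma step1: assumes "a \<in> V" "c \<in> V" shows "\<exists>s. aut s \<and> s a = c"
proof -
  consider "c = a" | "c = p a" | "c \<noteq> a" "c \<noteq> p a" by blast
  then show ?thesis
  proof cases
    case 1 then show ?thesis using aut_id by auto
  next
    case 2 then show ?thesis using aut_flip[OF assms(1)] by (intro exI[of _ "tr a (p a)"]) (auto simp: tr_def)
  next
    case 3
    have "p c \<noteq> a" using 3 assms pp by metis
    then show ?thesis using aut_P[OF assms 3] 3 assms pne[OF assms(1)]
      by (intro exI[of _ "tr a c \<circ> tr (p a) (p c)"]) (auto simp: tr_def)
  qed
qed

lemma step2: assumes "c \<in> V" "w \<in> V" "d \<in> V" "w \<noteq> c" "w \<noteq> p c" "d \<noteq> c" "d \<noteq> p c"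
  shows "\<exists>s. aut s \<and> s c = c \<and> s w = d"
proof -
  consider "d = w" | "d = p w" | "d \<noteq> w" "d \<noteq> p w" by blast
  then show ?thesis
  proof cases
    case 1 then show ?thesis using aut_id by auto
  next
    case 2
    have "p w \<noteq> c" using assms pp by metis
    then show ?thesis using aut_flip[OF assms(2)] 2 assms
      by (intro exI[of _ "tr w (p w)"]) (auto simp: tr_def)
  next
    case 3
    have "p w \<noteq> c" "p d \<noteq> c" "p d \<noteq> w" using assms 3 pp by metis+
    then show ?thesis using aut_P[OF assms(2,3) 3] 3 assms pne[OF assms(2)]
      by (intro exI[of _ "tr w d \<circ> tr (p w) (p d)"]) (auto simp: tr_def)
  qed
qed

lemma trans1: assumes "a \<in> V" "b \<in> V" "c \<in> V" "d \<in> V" "b \<noteq> a" "b \<noteq> p a" "d \<noteq> c" "d \<noteq> p c"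
  shows "\<exists>s. aut s \<and> s a = c \<and> s b = d"
proof -
  obtain s1 where s1: "aut s1" "s1 a = c" using step1 assms by blast
  have w: "s1 b \<in> V" "s1 b \<noteq> c" "s1 b \<noteq> p c"
    using aut_V[OF s1(1)] aut_inj[OF s1(1)] s1 assms pV aut_def by metis+
  obtain s2 where s2: "aut s2" "s2 c = c" "s2 (s1 b) = d" using step2[OF assms(3) w(1) assms(4) w(2,3) assms(7,8)] by blast
  show ?thesis using aut_comp[OF s1(1) s2(1)] s1 s2 by auto
qed

lemma aut_adj1: assumes "aut s" "x \<in> V" "y \<in> V"
  shows "(s x \<noteq> s y \<and> s y \<noteq> p (s x)) \<longleftrightarrow> (x \<noteq> y \<and> y \<noteq> p x)"
  using assms aut_inj[OF assms(1)] pV unfolding aut_def by metis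

end



context pmat
begin

lemma blk1_adj:
  assumes a: "a \<in> V" "b \<in> V" "b \<noteq> a" "b \<noteq> p a" and x: "x \<in> V" "y \<in> V"
  shows "(x \<noteq> y \<and> y \<noteq> p x \<and> \<not> (x = a \<and> y = b \<or> x = b \<and> y = a)) \<longleftrightarrow>
    ((tr a (p b) x = a \<and> tr a (p b) y = p a \<or> tr a (p b) x = p a \<and> tr a (p b) y = a) \<or>
     (tr a (p b) x \<noteq> tr a (p b) y \<and> tr a (p b) y \<noteq> p (tr a (p b) x) \<and>
       \<not> (tr a (p b) x = a \<and> tr a (p b) y = b \<or> tr a (p b) x = b \<and> tr a (p b) y = a))) \<and>
    \<not> (tr a (p b) x = p a \<and> tr a (p b) y = p b \<or> tr a (p b) x = p b \<and> tr a (p b) y = p a)"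
proof -
  have d: "p a \<noteq> a" "p b \<noteq> b" "p a \<noteq> b" "p b \<noteq> a" "p a \<noteq> p b" "p (p a) = a" "p (p b) = b"
    using a pp pne by metis+
  have e: "p (p x) = x" "p (p y) = y" "p x \<noteq> x" "p y \<noteq> y" "p x \<in> V" "p y \<in> V"
    using x pp pne pV by auto
  show ?thesis using d x a e by (auto simp: tr_def p_inj)
qed

lemma case1:
  assumes wG: "wf_graph G" and wG0: "wf_graph G0" and iso: "graph_iso G G0" and V0: "fst G0 = V"
    and adj: "\<And>x y. x \<in> V \<Longrightarrow> y \<in> V \<Longrightarrow> {x,y} \<in> snd G0 \<longleftrightarrow> x \<noteq> y \<and> y \<noteq> p x"
    and a: "a \<in> V" "b \<in> V" "b \<noteq> a" "b \<noteq> p a"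
    and rec: "edge_reconstructable G"
  shows "3 \<le> ern G"
proof -
  define H where "H = (V, insert {a, p a} (snd G0 - {{a,b}}))"
  have pa: "p a \<in> V" "p b \<in> V" "p a \<noteq> a" "p (p a) = a" "p (p b) = b" "p b \<noteq> b"
    using a pV pp pne by auto
  have e0: "{a,b} \<in> snd G0" using adj a by auto
  have T: "graph_iso (edge_delete G0 {a,b}) (edge_delete G0 e)" if e: "e \<in> snd G0" for e
  proof -
    obtain c d where cd: "e = {c,d}" "c \<in> V" "d \<in> V" using wf_edge[OF wG0 e] V0 by auto
    have "d \<noteq> c" "d \<noteq> p c" using adj[OF cd(2,3)] e cd(1) by auto
    then obtain s where s: "aut s" "s a = c" "s b = d" using trans1[OF a(1,2) cd(2,3) a(3,4)] by blast
    have "graph_iso (edge_delete G0 {a,b}) (edge_delete G0 {s a, s b})"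
    proof (rule del_iso[OF wG0])
      show "bij_betw s (fst G0) (fst G0)" using s(1) V0 unfolding aut_def by simp
      fix x y assume "x \<in> fst G0" "y \<in> fst G0"
      then show "({x, y} \<in> snd G0) = ({s x, s y} \<in> snd G0)"
        using adj aut_V[OF s(1)] aut_adj1[OF s(1)] V0 by auto
    qed (use a V0 in auto)
    then show ?thesis using s cd by simp
  qed
  have finV: "finite V" using wG0 V0 unfolding wf_graph_def by auto
  have wH: "wf_graph H"
  proof -
    have "e \<subseteq> V \<and> card e = 2" if "e \<in> snd G0" for e using wG0 V0 that unfolding wf_graph_def by auto
    then show ?thesis unfolding H_def wf_graph_def using finV a pa by auto
  qed
  have h: "{a, p a} \<noteq> {p a, p b}" "{a, p a} \<in> snd H" "{p a, p b} \<in> snd H"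
    unfolding H_def using a pa adj[of "p a" "p b"] by (auto simp: doubleton_eq_iff p_inj)
  have notin: "{a, p a} \<notin> snd G0" using adj[OF a(1) pa(1)] by auto
  have i1: "graph_iso (edge_delete H {a, p a}) (edge_delete G0 {a,b})"
  proof -
    have "edge_delete H {a, p a} = edge_delete G0 {a,b}"
      unfolding H_def edge_delete_def using V0 notin by (auto simp: prod_eq_iff)
    then show ?thesis using iso_refl by simp
  qed
  have i2: "graph_iso (edge_delete H {p a, p b}) (edge_delete G0 {a,b})"
  proof (rule iso_sym[OF wf_edge_delete[OF wG0]], rule iso_by_adj[OF wf_edge_delete[OF wG0] wf_edge_delete[OF wH]])
    show "bij_betw (tr a (p b)) (fst (edge_delete G0 {a, b})) (fst (edge_delete H {p a, p b}))"
      unfolding edge_delete_def H_def using V0 bij_tr[OF a(1) pa(2)] by simp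
    fix x y assume "x \<in> fst (edge_delete G0 {a, b})" "y \<in> fst (edge_delete G0 {a, b})"
    then have xy: "x \<in> V" "y \<in> V" using V0 unfolding edge_delete_def by auto
    have tv: "tr a (p b) x \<in> V" "tr a (p b) y \<in> V" using xy a pa by (auto simp: tr_def)
    have L: "({x, y} \<in> snd (edge_delete G0 {a, b})) \<longleftrightarrow> (x \<noteq> y \<and> y \<noteq> p x \<and> \<not> (x = a \<and> y = b \<or> x = b \<and> y = a))"
      unfolding edge_delete_def using adj[OF xy] by (auto simp: doubleton_eq_iff)
    have R: "{u, v} \<in> snd (edge_delete H {p a, p b}) \<longleftrightarrow>
      ((u = a \<and> v = p a \<or> u = p a \<and> v = a) \<or> (u \<noteq> v \<and> v \<noteq> p u \<and> \<not> (u = a \<and> v = b \<or> u = b \<and> v = a))) \<and>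
      \<not> (u = p a \<and> v = p b \<or> u = p b \<and> v = p a)" if "u \<in> V" "v \<in> V" for u v
      unfolding edge_delete_def H_def using adj[OF that] by (auto simp: doubleton_eq_iff)
    show "({x, y} \<in> snd (edge_delete G0 {a, b})) = ({tr a (p b) x, tr a (p b) y} \<in> snd (edge_delete H {p a, p b}))"
      unfolding L R[OF tv] using blk1_adj[OF a xy] .
  qed
  have nH: "\<not> graph_iso H G0"
  proof
    assume "graph_iso H G0"
    then obtain f where f: "bij_betw f (fst H) (fst G0)" "(\<lambda>e. f ` e) ` snd H = snd G0"
      unfolding graph_iso_def by blast
    have fV: "f (p a) \<in> V" using f(1) pa V0 unfolding H_def bij_betw_def by auto
    then obtain x where x: "x \<in> V" "f x = p (f (p a))" using f(1) pV V0 unfolding H_def bij_betw_def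
      by (metis fst_conv imageE)
    have "x \<noteq> p a" using x(2) pne[OF fV] by auto
    moreover have "{p a, y} \<in> snd H" if "y \<in> V" "y \<noteq> p a" for y
    proof (cases "y = a")
      case True then show ?thesis unfolding H_def by auto
    next
      case False
      have 1: "{p a, y} \<in> snd G0" using adj[OF pa(1) that(1)] that False pa(4) by auto
      have 2: "{p a, y} \<noteq> {a, b}" using pa(3) a(4) by (auto simp: doubleton_eq_iff)
      show ?thesis unfolding H_def using 1 2 by auto
    qed
    ultimately have "{p a, x} \<in> snd H" using x by blast
    then have "{f (p a), f x} \<in> snd G0" using iso_adj[OF wH f, of "p a" x] x pa unfolding H_def by auto
    then show False using adj[OF fV pV[OF fV]] x by auto
  qed
  show ?thesis using ern_ge3[OF wG wG0 iso T e0 wH nH h(1,2,3) i1 i2 rec] .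
qed

end



locale pmat2 = pmat +
  fixes n :: nat
  assumes Vn: "V = {0..<2*n}"
    and side: "x \<in> V \<Longrightarrow> (p x < n \<longleftrightarrow> \<not> x < n)"
begin

definition aut2 :: "(nat \<Rightarrow> nat) \<Rightarrow> bool" where
  "aut2 s \<longleftrightarrow> aut s \<and> (\<forall>x\<in>V. s x < n \<longleftrightarrow> x < n)"

lemma aut2_id: "aut2 id" unfolding aut2_def using aut_id by auto

lemma aut2_comp: assumes "aut2 s" "aut2 t" shows "aut2 (t \<circ> s)"
  using assms aut_comp aut_V unfolding aut2_def by auto

lemma aut2_P: assumes "x \<in> V" "y \<in> V" "y \<noteq> x" "x < n \<longleftrightarrow> y < n"
  shows "aut2 (tr x y \<circ> tr (p x) (p y))"
proof -
  have ny: "y \<noteq> p x" using side[OF assms(1)] assms(4) by auto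
  have "p x < n \<longleftrightarrow> p y < n" using side assms by auto
  then have "\<forall>z\<in>V. (tr x y \<circ> tr (p x) (p y)) z < n \<longleftrightarrow> z < n"
    using assms by (auto simp: tr_def)
  then show ?thesis unfolding aut2_def using aut_P[OF assms(1-3) ny] by blast
qed

lemma trans2: assumes "a \<in> V" "b \<in> V" "c \<in> V" "d \<in> V" "a < n" "c < n" "\<not> b < n" "\<not> d < n"
    "b \<noteq> p a" "d \<noteq> p c"
  shows "\<exists>s. aut2 s \<and> s a = c \<and> s b = d"
proof -
  obtain s1 where s1: "aut2 s1" "s1 a = c"
  proof (cases "c = a")
    case True then show ?thesis using that aut2_id by auto
  next
    case False
    have "p c \<noteq> a" "a \<noteq> p a" using side assms pne by metis+
    then show ?thesis using that[of "tr a c \<circ> tr (p a) (p c)"] aut2_P[OF assms(1,3) False] assms False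
      by (auto simp: tr_def)
  qed
  have s1a: "aut s1" "\<forall>x\<in>V. s1 x < n \<longleftrightarrow> x < n" using s1 unfolding aut2_def by auto
  define w where "w = s1 b"
  have pc: "p c = s1 (p a)" using s1a(1) s1(2) assms(1) unfolding aut_def by auto
  have w: "w \<in> V" "\<not> w < n" "w \<noteq> p c"
    using aut_V[OF s1a(1) assms(2)] s1a(2) assms(2,7) aut_inj[OF s1a(1) assms(2) pV[OF assms(1)]] assms(9) pc
    unfolding w_def by auto
  obtain s2 where s2: "aut2 s2" "s2 c = c" "s2 w = d"
  proof (cases "d = w")
    case True then show ?thesis using that aut2_id by auto
  next
    case False
    have "p w \<noteq> c" "p d \<noteq> c" "c \<noteq> w" "c \<noteq> d" "w \<noteq> p w" "d \<noteq> p w" "w \<noteq> p d"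
      using assms w pp pne side by metis+
    then show ?thesis using that[of "tr w d \<circ> tr (p w) (p d)"] aut2_P[OF w(1) assms(4) False] assms False w
      by (auto simp: tr_def)
  qed
  show ?thesis using aut2_comp[OF s1(1) s2(1)] s1 s2 w_def by auto
qed

lemma aut2_adj: assumes "aut2 s" "x \<in> V" "y \<in> V"
  shows "((s x < n \<longleftrightarrow> \<not> s y < n) \<and> s y \<noteq> p (s x)) \<longleftrightarrow> ((x < n \<longleftrightarrow> \<not> y < n) \<and> y \<noteq> p x)"
  using assms aut_inj pV unfolding aut2_def aut_def by metis

lemma blk2_adj:
  assumes a: "a \<in> V" "b \<in> V" "a < n" "\<not> b < n" "b \<noteq> p a" and x: "x \<in> V" "y \<in> V"
  shows "((x < n \<longleftrightarrow> \<not> y < n) \<and> y \<noteq> p x \<and> \<not> (x = a \<and> y = b \<or> x = b \<and> y = a)) \<longleftrightarrow>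
    ((tr a (p b) x = a \<and> tr a (p b) y = p a \<or> tr a (p b) x = p a \<and> tr a (p b) y = a) \<or>
     ((tr a (p b) x < n \<longleftrightarrow> \<not> tr a (p b) y < n) \<and> tr a (p b) y \<noteq> p (tr a (p b) x) \<and>
       \<not> (tr a (p b) x = a \<and> tr a (p b) y = b \<or> tr a (p b) x = b \<and> tr a (p b) y = a))) \<and>
    \<not> (tr a (p b) x = p a \<and> tr a (p b) y = p b \<or> tr a (p b) x = p b \<and> tr a (p b) y = p a)"
proof -
  have d: "p a \<noteq> a" "p b \<noteq> b" "p a \<noteq> b" "p b \<noteq> a" "p a \<noteq> p b" "p (p a) = a" "p (p b) = b"
    "\<not> p a < n" "p b < n"
    using a pp pne side by metis+
  have e: "p (p x) = x" "p (p y) = y" "p x \<noteq> x" "p y \<noteq> y" "p x \<in> V" "p y \<in> V"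
    "p x < n \<longleftrightarrow> \<not> x < n" "p y < n \<longleftrightarrow> \<not> y < n"
    using x pp pne pV side by auto
  show ?thesis using d x a e by (auto simp: tr_def p_inj)
qed

end



context pmat2
begin

lemma case2:
  assumes wG: "wf_graph G" and wG0: "wf_graph G0" and iso: "graph_iso G G0" and V0: "fst G0 = V"
    and adj: "\<And>x y. x \<in> V \<Longrightarrow> y \<in> V \<Longrightarrow> {x,y} \<in> snd G0 \<longleftrightarrow> (x < n \<longleftrightarrow> \<not> y < n) \<and> y \<noteq> p x"
    and a: "a \<in> V" "b \<in> V" "a < n" "\<not> b < n" "b \<noteq> p a"
    and n2: "2 \<le> n"
    and rec: "edge_reconstructable G"
  shows "3 \<le> ern G"
proof -
  define H where "H = (V, insert {a, p a} (snd G0 - {{a,b}}))"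
  have pa: "p a \<in> V" "p b \<in> V" "p a \<noteq> a" "p (p a) = a" "p (p b) = b" "p b \<noteq> b" "\<not> p a < n" "p b < n"
    using a pV pp pne side by auto
  have e0: "{a,b} \<in> snd G0" using adj a by auto
  have T: "graph_iso (edge_delete G0 {a,b}) (edge_delete G0 e)" if e: "e \<in> snd G0" for e
  proof -
    obtain c d where cd0: "e = {c,d}" "c \<in> V" "d \<in> V" using wf_edge[OF wG0 e] V0 by auto
    obtain c' d' where cd: "e = {c',d'}" "c' \<in> V" "d' \<in> V" "c' < n" "\<not> d' < n" "d' \<noteq> p c'"
    proof (cases "c < n")
      case True then show ?thesis using that[of c d] cd0 adj[OF cd0(2,3)] e by auto
    next
      case False
      have "d < n" "c \<noteq> p d" using False cd0 adj[OF cd0(2,3)] e pp by auto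
      then show ?thesis using that[of d c] cd0 False by auto
    qed
    obtain s where s: "aut2 s" "s a = c'" "s b = d'" using trans2[OF a(1,2) cd(2,3) a(3) cd(4) a(4) cd(5) a(5) cd(6)] by blast
    have sa: "aut s" using s(1) unfolding aut2_def by blast
    have "graph_iso (edge_delete G0 {a,b}) (edge_delete G0 {s a, s b})"
    proof (rule del_iso[OF wG0])
      show "bij_betw s (fst G0) (fst G0)" using sa V0 unfolding aut_def by simp
      fix x y assume "x \<in> fst G0" "y \<in> fst G0"
      then show "({x, y} \<in> snd G0) = ({s x, s y} \<in> snd G0)"
        using adj aut_V[OF sa] aut2_adj[OF s(1)] V0 by auto
    qed (use a V0 in auto)
    then show ?thesis using s cd by simp
  qed
  have finV: "finite V" using wG0 V0 unfolding wf_graph_def by auto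
  have wH: "wf_graph H"
  proof -
    have "e \<subseteq> V \<and> card e = 2" if "e \<in> snd G0" for e using wG0 V0 that unfolding wf_graph_def by auto
    then show ?thesis unfolding H_def wf_graph_def using finV a pa by auto
  qed
  have pab: "{p a, p b} \<in> snd G0" using adj[of "p a" "p b"] pa a by (auto simp: p_inj)
  have h: "{a, p a} \<noteq> {p a, p b}" "{a, p a} \<in> snd H" "{p a, p b} \<in> snd H"
    unfolding H_def using a pa pab by (auto simp: doubleton_eq_iff)
  have notin: "{a, p a} \<notin> snd G0" using adj[OF a(1) pa(1)] by auto
  have i1: "graph_iso (edge_delete H {a, p a}) (edge_delete G0 {a,b})"
  proof -
    have "edge_delete H {a, p a} = edge_delete G0 {a,b}"
      unfolding H_def edge_delete_def using V0 notin by (auto simp: prod_eq_iff)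
    then show ?thesis using iso_refl by simp
  qed
  have i2: "graph_iso (edge_delete H {p a, p b}) (edge_delete G0 {a,b})"
  proof (rule iso_sym[OF wf_edge_delete[OF wG0]], rule iso_by_adj[OF wf_edge_delete[OF wG0] wf_edge_delete[OF wH]])
    show "bij_betw (tr a (p b)) (fst (edge_delete G0 {a, b})) (fst (edge_delete H {p a, p b}))"
      unfolding edge_delete_def H_def using V0 bij_tr[OF a(1) pa(2)] by simp
    fix x y assume "x \<in> fst (edge_delete G0 {a, b})" "y \<in> fst (edge_delete G0 {a, b})"
    then have xy: "x \<in> V" "y \<in> V" using V0 unfolding edge_delete_def by auto
    have tv: "tr a (p b) x \<in> V" "tr a (p b) y \<in> V" using xy a pa by (auto simp: tr_def)
    have L: "({x, y} \<in> snd (edge_delete G0 {a, b})) \<longleftrightarrow> ((x < n \<longleftrightarrow> \<not> y < n) \<and> y \<noteq> p x \<and> \<not> (x = a \<and> y = b \<or> x = b \<and> y = a))"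
      unfolding edge_delete_def using adj[OF xy] by (auto simp: doubleton_eq_iff)
    have R: "{u, v} \<in> snd (edge_delete H {p a, p b}) \<longleftrightarrow>
      ((u = a \<and> v = p a \<or> u = p a \<and> v = a) \<or> ((u < n \<longleftrightarrow> \<not> v < n) \<and> v \<noteq> p u \<and> \<not> (u = a \<and> v = b \<or> u = b \<and> v = a))) \<and>
      \<not> (u = p a \<and> v = p b \<or> u = p b \<and> v = p a)" if "u \<in> V" "v \<in> V" for u v
      unfolding edge_delete_def H_def using adj[OF that] by (auto simp: doubleton_eq_iff)
    show "({x, y} \<in> snd (edge_delete G0 {a, b})) = ({tr a (p b) x, tr a (p b) y} \<in> snd (edge_delete H {p a, p b}))"
      unfolding L R[OF tv] using blk2_adj[OF a xy] .
  qed
  have nH: "\<not> graph_iso H G0"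
  proof
    assume "graph_iso H G0"
    then obtain f where f: "bij_betw f (fst H) (fst G0)" "(\<lambda>e. f ` e) ` snd H = snd G0"
      unfolding graph_iso_def by blast
    have fH: "fst H = V" unfolding H_def by simp
    have QH: "{x,y} \<notin> snd H" if "x \<in> V" "y \<in> V" "x \<noteq> p a" "y \<noteq> p a" "{p a, x} \<notin> snd H" "{p a, y} \<notin> snd H" for x y
    proof -
      have nx: "\<not> z < n" if "z \<in> V" "z \<noteq> p a" "{p a, z} \<notin> snd H" for z
      proof
        assume z: "z < n"
        show False
        proof (cases "z = a")
          case True then show False using that unfolding H_def by auto
        next
          case False
          have 1: "{p a, z} \<in> snd G0" using adj[OF pa(1) that(1)] z pa(7) False pa(4) by auto
          have 2: "{p a, z} \<noteq> {a, b}" using pa(3) a(5) by (auto simp: doubleton_eq_iff)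
          show False using that 1 2 unfolding H_def by auto
        qed
      qed
      have "\<not> x < n" "\<not> y < n" using nx that by auto
      then show ?thesis unfolding H_def using adj[OF that(1,2)] a(3) by (auto simp: doubleton_eq_iff)
    qed
    define v where "v = f (p a)"
    have fV: "v \<in> V" using f(1) pa V0 fH unfolding bij_betw_def v_def by auto
    define y where "y = (if v < n then (if v = 0 then 1 else 0) else (if v = n then n+1 else n))"
    have y: "y \<in> V" "y \<noteq> v" "y < n \<longleftrightarrow> v < n" using fV n2 Vn unfolding y_def by auto
    have pv: "p v \<in> V" "p v \<noteq> v" using pV pne fV by auto
    obtain x0 where x0: "x0 \<in> V" "f x0 = p v" using f(1) pv V0 fH unfolding bij_betw_def by (metis imageE)
    obtain y0 where y0: "y0 \<in> V" "f y0 = y" using f(1) y V0 fH unfolding bij_betw_def by (metis imageE)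
    have ia: "\<And>u w. u \<in> V \<Longrightarrow> w \<in> V \<Longrightarrow> {u,w} \<in> snd H \<longleftrightarrow> {f u, f w} \<in> snd G0"
      using iso_adj[OF wH f] fH by auto
    have "x0 \<noteq> p a" using x0 pv v_def by auto
    moreover have "y0 \<noteq> p a" using y0 y v_def by auto
    moreover have "{p a, x0} \<notin> snd H" using ia[OF pa(1) x0(1)] x0(2) adj[OF fV pv(1)] v_def by auto
    moreover have "{p a, y0} \<notin> snd H" using ia[OF pa(1) y0(1)] y0(2) adj[OF fV y(1)] y v_def by auto
    ultimately have "{x0,y0} \<notin> snd H" using QH x0 y0 by blast
    moreover have "{p v, y} \<in> snd G0" using adj[OF pv(1) y(1)] side[OF fV] y pp[OF fV] by auto
    ultimately show False using ia[OF x0(1) y0(1)] x0 y0 by auto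
  qed
  show ?thesis using ern_ge3[OF wG wG0 iso T e0 wH nH h(1,2,3) i1 i2 rec] .
qed

end



lemma pm_pmat:
  assumes pmK: "perfect_matching K M" and wfK: "\<forall>e\<in>snd K. e \<subseteq> fst K \<and> card e = 2"
    and fin: "finite (fst K)"
  shows "pmat (fst K) (pm M)"
proof
  fix x assume x: "x \<in> fst K"
  note b = pm_basic[OF pmK wfK x]
  show "pm M x \<in> fst K" "pm M x \<noteq> x" using b by auto
  have "{pm M x, x} \<in> M" using b by (simp add: insert_commute)
  then show "pm M (pm M x) = x" using pm_basic[OF pmK wfK, of "pm M x"] b by auto
qed (rule fin)

theorem mainTheorem7:
  fixes G :: graph and n :: nat and M :: "nat set set"
  assumes "wf_graph G"
    and "(even n \<and> 4 \<le> n \<and> perfect_matching (complete_graph {0..<n}) M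
            \<and> graph_iso G (graph_minus (complete_graph {0..<n}) M))
       \<or> (3 \<le> n \<and> perfect_matching (complete_bipartite n) M
            \<and> graph_iso G (graph_minus (complete_bipartite n) M))"
    and "edge_reconstructable G"
  shows "3 \<le> ern G"
  using assms(2)
proof (elim disjE conjE)
  assume n4: "4 \<le> n" and pmK: "perfect_matching (complete_graph {0..<n}) M"
    and iso: "graph_iso G (graph_minus (complete_graph {0..<n}) M)"
  define K where "K = complete_graph {0..<n}"
  define V where "V = {0..<n}"
  have wfK: "\<forall>e\<in>snd K. e \<subseteq> fst K \<and> card e = 2" unfolding K_def complete_graph_def by auto
  have fK: "fst K = V" unfolding K_def V_def complete_graph_def by simp
  interpret pmat V "pm M" using pm_pmat[OF pmK[folded K_def] wfK] fK K_def V_def complete_graph_def by auto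
  define G0 where "G0 = graph_minus K M"
  have V0: "fst G0 = V" unfolding G0_def graph_minus_def using fK by simp
  have wG0: "wf_graph G0" unfolding G0_def graph_minus_def wf_graph_def K_def complete_graph_def by auto
  have adj: "{x,y} \<in> snd G0 \<longleftrightarrow> x \<noteq> y \<and> y \<noteq> pm M x" if "x \<in> V" "y \<in> V" for x y
  proof -
    have "{x,y} \<in> M \<longleftrightarrow> y = pm M x" using pm_basic[OF pmK[folded K_def] wfK] that fK by auto
    then show ?thesis unfolding G0_def graph_minus_def K_def complete_graph_def using that V_def
      by (auto simp: card_insert_if)
  qed
  define b where "b = (if pm M 0 = 1 then 2 else 1::nat)"
  have a: "0 \<in> V" "b \<in> V" "b \<noteq> 0" "b \<noteq> pm M 0" using n4 unfolding V_def b_def by auto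
  show ?thesis using case1[OF assms(1) wG0 iso[folded K_def, folded G0_def] V0 adj a assms(3)] .
next
  assume n3: "3 \<le> n" and pmK: "perfect_matching (complete_bipartite n) M"
    and iso: "graph_iso G (graph_minus (complete_bipartite n) M)"
  define K where "K = complete_bipartite n"
  define V where "V = {0..<2*n}"
  have edgeK: "e \<in> snd K \<longleftrightarrow> (\<exists>a b. e = {a,b} \<and> a < n \<and> n \<le> b \<and> b < 2*n)" for e
    unfolding K_def complete_bipartite_def by auto
  have wfK: "\<forall>e\<in>snd K. e \<subseteq> fst K \<and> card e = 2" unfolding K_def complete_bipartite_def by auto
  have fK: "fst K = V" unfolding K_def V_def complete_bipartite_def by simp
  interpret pmat V "pm M" using pm_pmat[OF pmK[folded K_def] wfK] fK K_def V_def complete_bipartite_def by auto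
  have MK: "M \<subseteq> snd K" using pmK unfolding K_def perfect_matching_def by auto
  have side: "pm M x < n \<longleftrightarrow> \<not> x < n" if "x \<in> V" for x
  proof -
    have "{x, pm M x} \<in> snd K" using pm_basic[OF pmK[folded K_def] wfK] that fK MK by auto
    then obtain a b where "{x, pm M x} = {a,b}" "a < n" "n \<le> b" using edgeK by blast
    then show ?thesis by (auto simp: doubleton_eq_iff)
  qed
  interpret pmat2 V "pm M" n by unfold_locales (auto simp: V_def side)
  define G0 where "G0 = graph_minus K M"
  have V0: "fst G0 = V" unfolding G0_def graph_minus_def using fK by simp
  have wG0: "wf_graph G0" unfolding G0_def graph_minus_def wf_graph_def K_def complete_bipartite_def by auto
  have adj: "{x,y} \<in> snd G0 \<longleftrightarrow> (x < n \<longleftrightarrow> \<not> y < n) \<and> y \<noteq> pm M x" if "x \<in> V" "y \<in> V" for x y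
  proof -
    have "{x,y} \<in> M \<longleftrightarrow> y = pm M x" using pm_basic[OF pmK[folded K_def] wfK] that fK by auto
    moreover have "{x,y} \<in> snd K \<longleftrightarrow> (x < n \<longleftrightarrow> \<not> y < n)"
    proof
      assume "{x,y} \<in> snd K" then show "x < n \<longleftrightarrow> \<not> y < n" unfolding edgeK by (auto simp: doubleton_eq_iff)
    next
      assume h: "x < n \<longleftrightarrow> \<not> y < n"
      show "{x,y} \<in> snd K"
      proof (cases "x < n")
        case True then show ?thesis unfolding edgeK using h that V_def by (intro exI[of _ x] exI[of _ y]) auto
      next
        case False then show ?thesis unfolding edgeK using h that V_def
          by (intro exI[of _ y] exI[of _ x]) (auto simp: insert_commute)
      qed
    qed
    ultimately show ?thesis unfolding G0_def graph_minus_def by auto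
  qed
  define b where "b = (if pm M 0 = n then n+1 else n)"
  have a: "0 \<in> V" "b \<in> V" "0 < n" "\<not> b < n" "b \<noteq> pm M 0" using n3 unfolding V_def b_def by auto
  show ?thesis using case2[OF assms(1) wG0 iso[folded K_def, folded G0_def] V0 adj a _ assms(3)] n3 by auto
qed


end
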